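(* Let $R$ be a partially colored tree in which every colored vertex is a leaf (a trunk), colored from a set of $3$ colors, having two colored vertices $x$ and $y$ and possibly one further colored vertex $v$ (and no other colored vertices), such that (i) $c(x)\ne c(y)$, (ii) $d(x,y)$ is even, and (iii) every vertex at odd distance from $x$ on the unique $x,y$-path has degree at least $4$. Then Bob can win the $3$-Expanded Coloring Game on $R$ if Alice chooses to pass on her first turn.
   Context: $c(w)$ denotes the color of a colored vertex $w$; colorings are proper on colored vertices. A color is legal for an uncolored vertex if no neighbor has it. The $k$-coloring game on a partially colored graph: Alice and Bob alternate turns, Alice first, each coloring an uncolored vertex with a legal color from a $k$-set of colors; Bob wins if at some point an uncolored vertex has no legal color, Alice wins if all vertices get colored. The $k$-Expanded Coloring Game ($k$-ECG) is the same except that on her turn Alice may choose not to color a vertex, and if she does not color a vertex she may instead add to the forest a single new colored leaf (a new vertex joined to exactly one existing vertex, colored with one of the $k$ colors). *)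

theory Defs
  imports Main
begin

text \<open>Vertices are natural numbers so that fresh vertices (new leaves) always exist.\<close>

definition degree :: "(nat \<times> nat) set \<Rightarrow> nat \<Rightarrow> nat" where
  "degree E u = card {w. (u, w) \<in> E}"

definition is_walk :: "(nat \<times> nat) set \<Rightarrow> nat list \<Rightarrow> bool" where
  "is_walk E p \<longleftrightarrow> p \<noteq> [] \<and> (\<forall>i. Suc i < length p \<longrightarrow> (p ! i, p ! Suc i) \<in> E)"

definition is_path :: "(nat \<times> nat) set \<Rightarrow> nat list \<Rightarrow> nat \<Rightarrow> nat \<Rightarrow> bool" where
  "is_path E p a b \<longleftrightarrow> is_walk E p \<and> distinct p \<and> hd p = a \<and> last p = b"

definition has_cycle :: "(nat \<times> nat) set \<Rightarrow> bool" where
  "has_cycle E \<longleftrightarrow> (\<exists>c. length c \<ge> 3 \<and> distinct c \<and> is_walk E c \<and> (last c, hd c) \<in> E)"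

definition is_tree :: "nat set \<Rightarrow> (nat \<times> nat) set \<Rightarrow> bool" where
  "is_tree V E \<longleftrightarrow> finite V \<and> V \<noteq> {} \<and> E \<subseteq> V \<times> V \<and> sym E \<and> (\<forall>u. (u, u) \<notin> E)
     \<and> (\<forall>a\<in>V. \<forall>b\<in>V. \<exists>p. is_path E p a b) \<and> \<not> has_cycle E"

definition proper_partial :: "(nat \<times> nat) set \<Rightarrow> (nat \<Rightarrow> nat option) \<Rightarrow> bool" where
  "proper_partial E col \<longleftrightarrow> (\<forall>u w. (u, w) \<in> E \<longrightarrow> col u \<noteq> None \<longrightarrow> col u \<noteq> col w)"

definition legal :: "nat \<Rightarrow> (nat \<times> nat) set \<Rightarrow> (nat \<Rightarrow> nat option) \<Rightarrow> nat \<Rightarrow> nat \<Rightarrow> bool" where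
  "legal k E col u c \<longleftrightarrow> c < k \<and> (\<forall>w. (u, w) \<in> E \<longrightarrow> col w \<noteq> Some c)"

definition stuck :: "nat \<Rightarrow> nat set \<Rightarrow> (nat \<times> nat) set \<Rightarrow> (nat \<Rightarrow> nat option) \<Rightarrow> bool" where
  "stuck k V E col \<longleftrightarrow> (\<exists>u\<in>V. col u = None \<and> (\<forall>c. \<not> legal k E col u c))"

inductive ecg_alice_move :: "nat \<Rightarrow> nat set \<Rightarrow> (nat \<times> nat) set \<Rightarrow> (nat \<Rightarrow> nat option)
    \<Rightarrow> nat set \<Rightarrow> (nat \<times> nat) set \<Rightarrow> (nat \<Rightarrow> nat option) \<Rightarrow> bool" where
  color: "u \<in> V \<Longrightarrow> col u = None \<Longrightarrow> legal k E col u c \<Longrightarrow>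
            ecg_alice_move k V E col V E (col(u := Some c))"
| pass: "ecg_alice_move k V E col V E col"
| add_leaf: "w \<notin> V \<Longrightarrow> u \<in> V \<Longrightarrow> c < k \<Longrightarrow> col u \<noteq> Some c \<Longrightarrow>
            ecg_alice_move k V E col (insert w V) (E \<union> {(u, w), (w, u)}) (col(w := Some c))"

inductive ecg_bob_wins_bob_turn and ecg_bob_wins_alice_turn
  :: "nat \<Rightarrow> nat set \<Rightarrow> (nat \<times> nat) set \<Rightarrow> (nat \<Rightarrow> nat option) \<Rightarrow> bool" where
  bob_stuck: "stuck k V E col \<Longrightarrow> ecg_bob_wins_bob_turn k V E col"
| bob_move: "u \<in> V \<Longrightarrow> col u = None \<Longrightarrow> legal k E col u c \<Longrightarrow>
      ecg_bob_wins_alice_turn k V E (col(u := Some c)) \<Longrightarrow> ecg_bob_wins_bob_turn k V E col"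
| alice_stuck: "stuck k V E col \<Longrightarrow> ecg_bob_wins_alice_turn k V E col"
| alice_all: "(\<forall>V' E' col'. ecg_alice_move k V E col V' E' col' \<longrightarrow> ecg_bob_wins_bob_turn k V' E' col')
      \<Longrightarrow> ecg_bob_wins_alice_turn k V E col"

end

theory Submission
  imports Defs
begin

fun wk :: "(nat \<times> nat) set \<Rightarrow> nat list \<Rightarrow> bool" where
  "wk E [] = True"
| "wk E [x] = True"
| "wk E (x # y # zs) = ((x, y) \<in> E \<and> wk E (y # zs))"

lemma is_walk_Cons2: "is_walk E (x # y # zs) \<longleftrightarrow> (x, y) \<in> E \<and> is_walk E (y # zs)"
proof
  assume h: "is_walk E (x # y # zs)"
  have "(x,y) \<in> E" using h unfolding is_walk_def by (metis One_nat_def Suc_less_eq length_Cons nth_Cons_0 nth_Cons_Suc zero_less_Suc)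
  moreover have "is_walk E (y # zs)" unfolding is_walk_def
  proof (intro conjI allI impI)
    fix i assume "Suc i < length (y # zs)"
    then have "Suc (Suc i) < length (x # y # zs)" by simp
    then have "((x # y # zs) ! Suc i, (x # y # zs) ! Suc (Suc i)) \<in> E" using h unfolding is_walk_def by blast
    then show "((y # zs) ! i, (y # zs) ! Suc i) \<in> E" by simp
  qed simp
  ultimately show "(x, y) \<in> E \<and> is_walk E (y # zs)" by simp
next
  assume h: "(x, y) \<in> E \<and> is_walk E (y # zs)"
  show "is_walk E (x # y # zs)" unfolding is_walk_def
  proof (intro conjI allI impI)
    fix i assume i: "Suc i < length (x # y # zs)"
    show "((x # y # zs) ! i, (x # y # zs) ! Suc i) \<in> E"
    proof (cases i)
      case 0 then show ?thesis using h by simp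
    next
      case (Suc k)
      then have "Suc k < length (y # zs)" using i by simp
      then have "((y # zs) ! k, (y # zs) ! Suc k) \<in> E" using h unfolding is_walk_def by blast
      then show ?thesis using Suc by simp
    qed
  qed simp
qed

lemma walk_wk: "xs \<noteq> [] \<Longrightarrow> is_walk E xs \<longleftrightarrow> wk E xs"
proof (induction E xs rule: wk.induct)
  case (1 E) then show ?case by simp
next
  case (2 E x) then show ?case by (simp add: is_walk_def)
next
  case (3 E x y zs) then show ?case by (simp add: is_walk_Cons2)
qed

lemma wk_append: "wk E (xs @ ys) \<longleftrightarrow> wk E xs \<and> wk E ys \<and> (xs \<noteq> [] \<longrightarrow> ys \<noteq> [] \<longrightarrow> (last xs, hd ys) \<in> E)"
proof (induction E xs rule: wk.induct)
  case (1 E) then show ?case by simp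
next
  case (2 E x) then show ?case by (cases ys) auto
next
  case (3 E x y zs) then show ?case by auto
qed

locale T =
  fixes V0 :: "nat set" and E0 :: "(nat \<times> nat) set" and p :: "nat \<Rightarrow> nat" and m :: nat
    and sp tp :: "nat \<Rightarrow> nat"
  assumes sub: "E0 \<subseteq> V0 \<times> V0" and symE: "sym E0" and irr: "\<forall>u. (u,u) \<notin> E0"
    and nocyc: "\<not> has_cycle E0"
    and m1: "m \<ge> 1"
    and pinj: "inj_on p {..2*m}"
    and pE: "\<forall>i<2*m. (p i, p (Suc i)) \<in> E0"
    and spE: "\<forall>i. odd i \<and> i < 2*m \<longrightarrow> (p i, sp i) \<in> E0 \<and> (p i, tp i) \<in> E0 \<and> sp i \<noteq> tp i
        \<and> sp i \<noteq> p (i-1) \<and> sp i \<noteq> p (Suc i) \<and> tp i \<noteq> p (i-1) \<and> tp i \<noteq> p (Suc i)"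
begin

definition isp :: "nat \<Rightarrow> nat \<Rightarrow> bool" where
  "isp s i \<longleftrightarrow> odd i \<and> i < 2*m \<and> (s = sp i \<or> s = tp i)"

definition offp :: "nat \<Rightarrow> bool" where
  "offp z \<longleftrightarrow> (\<forall>l\<le>2*m. z \<noteq> p l)"

lemma sym': "(a,b) \<in> E0 \<Longrightarrow> (b,a) \<in> E0"
  using symE by (meson symD)

lemma spE': "odd i \<Longrightarrow> i < 2*m \<Longrightarrow> (p i, sp i) \<in> E0 \<and> (p i, tp i) \<in> E0 \<and> sp i \<noteq> tp i
        \<and> sp i \<noteq> p (i-1) \<and> sp i \<noteq> p (Suc i) \<and> tp i \<noteq> p (i-1) \<and> tp i \<noteq> p (Suc i)"
  using spE by simp

lemma isp_E: "isp s i \<Longrightarrow> (p i, s) \<in> E0"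
  unfolding isp_def using spE' by (elim conjE disjE) simp_all

lemma isp_ne: "isp s i \<Longrightarrow> s \<noteq> p (i-1) \<and> s \<noteq> p (Suc i)"
  unfolding isp_def using spE' by (elim conjE disjE) simp_all

lemma no_cycle: "distinct L \<Longrightarrow> wk E0 L \<Longrightarrow> length L \<ge> 3 \<Longrightarrow> (last L, hd L) \<in> E0 \<Longrightarrow> False"
proof -
  assume a: "distinct L" "wk E0 L" "length L \<ge> 3" "(last L, hd L) \<in> E0"
  then have "L \<noteq> []" by auto
  then have "is_walk E0 L" using a walk_wk by blast
  then have "has_cycle E0" unfolding has_cycle_def using a by blast
  then show False using nocyc by simp
qed

lemma seg_wk: "a + d \<le> 2*m \<Longrightarrow> wk E0 (map p [a..<Suc (a+d)])"
proof (induction d)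
  case 0 then show ?case by simp
next
  case (Suc d)
  have eq: "[a..<Suc (a + Suc d)] = [a..<Suc (a+d)] @ [Suc (a+d)]" by simp
  have "(p (a+d), p (Suc (a+d))) \<in> E0" using pE Suc.prems by simp
  then show ?case using Suc by (simp only: eq map_append wk_append) simp
qed

lemma seg_props:
  assumes "a \<le> b" "b \<le> 2*m"
  shows "wk E0 (map p [a..<Suc b])" "distinct (map p [a..<Suc b])"
    "hd (map p [a..<Suc b]) = p a" "last (map p [a..<Suc b]) = p b"
    "length (map p [a..<Suc b]) = Suc b - a" "set (map p [a..<Suc b]) = p ` {a..b}"
proof -
  show "wk E0 (map p [a..<Suc b])" using seg_wk[of a "b-a"] assms by simp
  show "distinct (map p [a..<Suc b])"
  proof -
    have "inj_on p {a..b}" using inj_on_subset[OF pinj] assms by auto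
    moreover have "set [a..<Suc b] = {a..b}" by auto
    ultimately show ?thesis by (simp add: distinct_map del: upt_Suc)
  qed
  show "hd (map p [a..<Suc b]) = p a" using assms by (simp add: hd_map hd_upt del: upt_Suc)
  show "last (map p [a..<Suc b]) = p b" using assms by (simp add: last_map)
  show "length (map p [a..<Suc b]) = Suc b - a" using assms by simp
  show "set (map p [a..<Suc b]) = p ` {a..b}" by auto
qed

lemma cyc_seg:
  assumes "a \<le> b" "b \<le> 2*m" "X \<noteq> []" "distinct X" "set X \<inter> p ` {a..b} = {}" "wk E0 X"
    "(p b, hd X) \<in> E0" "(last X, p a) \<in> E0" "Suc b - a + length X \<ge> 3"
  shows False
proof -
  let ?L = "map p [a..<Suc b] @ X"
  note s = seg_props[OF assms(1,2)]
  have "distinct ?L" using s assms by (auto simp del: upt_Suc)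
  moreover have "wk E0 ?L" using s assms by (simp add: wk_append del: upt_Suc)
  moreover have "length ?L \<ge> 3" using s assms by (simp del: upt_Suc)
  moreover have "(last ?L, hd ?L) \<in> E0" using s assms by (simp del: upt_Suc)
  ultimately show False using no_cycle by blast
qed

lemma F_pp: "a \<le> 2*m \<Longrightarrow> b \<le> 2*m \<Longrightarrow> (p a, p b) \<in> E0 \<Longrightarrow> b = Suc a \<or> a = Suc b"
proof -
  have main: "a < b \<Longrightarrow> b \<le> 2*m \<Longrightarrow> (p b, p a) \<in> E0 \<Longrightarrow> b = Suc a" for a b
  proof (rule ccontr)
    assume h: "a < b" "b \<le> 2*m" "(p b, p a) \<in> E0" "b \<noteq> Suc a"
    note s = seg_props[of a b]
    have "3 \<le> Suc b - a" using h by simp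
    then show False using no_cycle[of "map p [a..<Suc b]"] s h by (simp del: upt_Suc)
  qed
  assume h: "a \<le> 2*m" "b \<le> 2*m" "(p a, p b) \<in> E0"
  show ?thesis
  proof (cases a b rule: linorder_cases)
    case less then show ?thesis using main[of a b] h sym' by blast
  next
    case equal then show ?thesis using h irr by simp
  next
    case greater then show ?thesis using main[of b a] h by blast
  qed
qed

lemma isp_lt: "isp s i \<Longrightarrow> i < 2*m \<and> odd i"
  unfolding isp_def by simp

lemma offp_disj: "offp z \<Longrightarrow> b \<le> 2*m \<Longrightarrow> z \<notin> p ` {a..b}"
  unfolding offp_def by (auto simp: image_iff)

lemma offp_ne: "offp z \<Longrightarrow> l \<le> 2*m \<Longrightarrow> z \<noteq> p l \<and> p l \<noteq> z"
  unfolding offp_def by blast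

lemma cyc1: "a < b \<Longrightarrow> b \<le> 2*m \<Longrightarrow> offp x \<Longrightarrow> (p b, x) \<in> E0 \<Longrightarrow> (x, p a) \<in> E0 \<Longrightarrow> False"
  by (rule cyc_seg[of a b "[x]"]) (auto dest: offp_disj)

lemma cyc2: "a \<le> b \<Longrightarrow> b \<le> 2*m \<Longrightarrow> offp x \<Longrightarrow> offp y \<Longrightarrow> x \<noteq> y \<Longrightarrow>
   (p b, x) \<in> E0 \<Longrightarrow> (x, y) \<in> E0 \<Longrightarrow> (y, p a) \<in> E0 \<Longrightarrow> False"
  by (rule cyc_seg[of a b "[x, y]"]) (auto dest: offp_disj)

lemma cyc3: "a \<le> b \<Longrightarrow> b \<le> 2*m \<Longrightarrow> offp x \<Longrightarrow> offp y \<Longrightarrow> offp w \<Longrightarrow> x \<noteq> y \<Longrightarrow> x \<noteq> w \<Longrightarrow> y \<noteq> w \<Longrightarrow>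
   (p b, x) \<in> E0 \<Longrightarrow> (x, y) \<in> E0 \<Longrightarrow> (y, w) \<in> E0 \<Longrightarrow> (w, p a) \<in> E0 \<Longrightarrow> False"
  by (rule cyc_seg[of a b "[x, y, w]"]) (auto dest: offp_disj)

lemma F2: "isp s i \<Longrightarrow> offp s"
  unfolding offp_def
proof (intro allI impI notI)
  fix l assume h: "isp s i" "l \<le> 2*m" "s = p l"
  have "i < 2*m" using isp_lt h by blast
  moreover have "(p i, p l) \<in> E0" using isp_E h by simp
  ultimately have "l = Suc i \<or> i = Suc l" using F_pp h by simp
  then show False using isp_ne[OF h(1)] h by auto
qed

lemma F_s: assumes "isp s i" "l \<le> 2*m" "(s, p l) \<in> E0" shows "l = i"
proof (rule ccontr)
  assume ne: "l \<noteq> i"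
  have off: "offp s" using F2 assms by blast
  have e1: "(p i, s) \<in> E0" using isp_E assms by blast
  have i2: "i < 2*m" using isp_lt assms by blast
  show False
  proof (cases "i < l")
    case True
    show False
      by (rule cyc1[of i l s]) (use True assms off e1 sym' offp_disj in auto)
  next
    case False
    then have "l < i" using ne by simp
    show False
      by (rule cyc1[of l i s]) (use \<open>l < i\<close> i2 assms off e1 sym' offp_disj in auto)
  qed
qed

lemma F_ss: assumes "isp s i" "isp s' i'" "s \<noteq> s'" shows "(s, s') \<notin> E0"
proof
  assume e: "(s, s') \<in> E0"
  have off: "offp s" "offp s'" using F2 assms by blast+
  have e1: "(p i, s) \<in> E0" "(p i', s') \<in> E0" using isp_E assms by blast+
  have i2: "i < 2*m" "i' < 2*m" using isp_lt assms by blast+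
  consider "i = i'" | "i < i'" | "i' < i" by linarith
  then show False
  proof cases
    case 1
    show False
      by (rule cyc2[of i i s s']) (use 1 assms off e e1 i2 sym' offp_disj in auto)
  next
    case 2
    show False
      by (rule cyc2[of i i' s' s]) (use 2 assms off e e1 i2 sym' offp_disj in auto)
  next
    case 3
    show False
      by (rule cyc2[of i' i s s']) (use 3 assms off e e1 i2 sym' offp_disj in auto)
  qed
qed

lemma F_zs: assumes "isp s i" "(z, s) \<in> E0" "l \<le> 2*m" "(z, p l) \<in> E0" shows "z = p i"
proof (rule ccontr)
  assume nz: "z \<noteq> p i"
  have off: "offp s" using F2 assms by blast
  have e1: "(p i, s) \<in> E0" using isp_E assms by blast
  have i2: "i < 2*m" using isp_lt assms by blast
  have offz: "offp z"
    unfolding offp_def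
  proof (intro allI impI notI)
    fix l' assume "l' \<le> 2*m" "z = p l'"
    then have "l' = i" using F_s[OF assms(1), of l'] assms(2) sym' by blast
    then show False using nz \<open>z = p l'\<close> by simp
  qed
  have zs: "z \<noteq> s" using assms(2) irr by auto
  consider "l = i" | "i < l" | "l < i" by linarith
  then show False
  proof cases
    case 1
    show False
      by (rule cyc2[of i i s z]) (use 1 assms off offz zs e1 i2 sym' offp_disj in auto)
  next
    case 2
    show False
      by (rule cyc2[of i l z s]) (use 2 assms off offz zs e1 i2 sym' offp_disj in auto)
  next
    case 3
    show False
      by (rule cyc2[of l i s z]) (use 3 assms off offz zs e1 i2 sym' offp_disj in auto)
  qed
qed

lemma F_zss: assumes "isp s i" "isp s' i'" "s \<noteq> s'" "(z, s) \<in> E0" "(z, s') \<in> E0"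
  shows "z = p i"
proof (rule ccontr)
  assume nz: "z \<noteq> p i"
  have off: "offp s" "offp s'" using F2 assms by blast+
  have e1: "(p i, s) \<in> E0" "(p i', s') \<in> E0" using isp_E assms by blast+
  have i2: "i < 2*m" "i' < 2*m" using isp_lt assms by blast+
  have offz: "offp z"
    unfolding offp_def
  proof (intro allI impI notI)
    fix l' assume "l' \<le> 2*m" "z = p l'"
    then have "l' = i" using F_s[OF assms(1), of l'] assms(4) sym' by blast
    then show False using nz \<open>z = p l'\<close> by simp
  qed
  have zs: "z \<noteq> s" "z \<noteq> s'" using assms(4,5) irr by auto
  consider "i = i'" | "i < i'" | "i' < i" by linarith
  then show False
  proof cases
    case 1
    show False
      by (rule cyc3[of i i s z s']) (use 1 assms off offz zs e1 i2 sym' offp_disj in auto)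
  next
    case 2
    show False
      by (rule cyc3[of i i' s' z s]) (use 2 assms off offz zs e1 i2 sym' offp_disj in auto)
  next
    case 3
    show False
      by (rule cyc3[of i' i s z s']) (use 3 assms off offz zs e1 i2 sym' offp_disj in auto)
  qed
qed

lemma F_z2: assumes "(z, p l) \<in> E0" "(z, p l') \<in> E0" "l < l'" "l' \<le> 2*m" shows "\<not> offp z"
proof
  assume offz: "offp z"
  show False
    by (rule cyc1[of l l']) (use assms offz sym' offp_disj in auto)
qed

lemma p_V0: "l \<le> 2*m \<Longrightarrow> p l \<in> V0"
proof (cases "l < 2*m")
  case True
  then show ?thesis using pE sub by blast
next
  case False
  assume "l \<le> 2*m"
  then have l: "l = Suc (2*m - 1)" using False m1 by simp
  have "2*m-1 < 2*m" using m1 by simp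
  then have "(p (2*m-1), p (Suc (2*m-1))) \<in> E0" using pE by blast
  then show ?thesis using l sub by blast
qed

lemma isp_V0: "isp s i \<Longrightarrow> s \<in> V0"
  using isp_E sub by blast

definition extd :: "nat set \<Rightarrow> (nat \<times> nat) set \<Rightarrow> bool" where
  "extd V E \<longleftrightarrow> V0 \<subseteq> V \<and> E \<subseteq> V \<times> V \<and> sym E \<and> (\<forall>a\<in>V0. \<forall>b\<in>V0. ((a,b) \<in> E) = ((a,b) \<in> E0))
     \<and> (\<forall>z a b. z \<notin> V0 \<longrightarrow> a \<in> V0 \<longrightarrow> b \<in> V0 \<longrightarrow> (z,a) \<in> E \<longrightarrow> (z,b) \<in> E \<longrightarrow> a = b)"

lemma extd_E0: "extd V E \<Longrightarrow> a \<in> V0 \<Longrightarrow> b \<in> V0 \<Longrightarrow> ((a,b) \<in> E) = ((a,b) \<in> E0)"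
  unfolding extd_def by blast

lemma extd_sym: "extd V E \<Longrightarrow> (a,b) \<in> E \<Longrightarrow> (b,a) \<in> E"
  unfolding extd_def by (meson symD)

lemma extd_sub: "extd V E \<Longrightarrow> (a,b) \<in> E \<Longrightarrow> a \<in> V \<and> b \<in> V"
  unfolding extd_def by blast

lemma extd_V0: "extd V E \<Longrightarrow> V0 \<subseteq> V"
  unfolding extd_def by blast

lemma extd_two: "extd V E \<Longrightarrow> a \<in> V0 \<Longrightarrow> b \<in> V0 \<Longrightarrow> a \<noteq> b \<Longrightarrow> (z,a) \<in> E \<Longrightarrow> (z,b) \<in> E
   \<Longrightarrow> z \<in> V0 \<and> (z,a) \<in> E0 \<and> (z,b) \<in> E0"
proof -
  assume h: "extd V E" "a \<in> V0" "b \<in> V0" "a \<noteq> b" "(z,a) \<in> E" "(z,b) \<in> E"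
  then have "z \<in> V0" unfolding extd_def by blast
  then show ?thesis using h extd_E0 by blast
qed

lemma alice_step:
  assumes mv: "ecg_alice_move 3 V E col V' E' col'" and ex: "extd V E"
  shows "\<exists>zn. extd V' E' \<and> V \<subseteq> V' \<and> E \<subseteq> E' \<and> (\<forall>z\<in>V'. z \<notin> V \<longrightarrow> z = zn)
     \<and> (\<forall>u. u \<noteq> zn \<longrightarrow> col' u = col u)
     \<and> (\<forall>a b. (a,b) \<in> E' \<longrightarrow> a \<in> V \<longrightarrow> b \<in> V \<longrightarrow> (a,b) \<in> E)
     \<and> (zn \<in> V \<longrightarrow> col' zn \<noteq> col zn \<longrightarrow> col zn = None \<and> (\<exists>r. col' zn = Some r \<and> legal 3 E col zn r))"
  using mv
proof cases
  case (color u c)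
  show ?thesis by (rule exI[of _ u]) (use color ex in auto)
next
  case pass
  show ?thesis by (rule exI[of _ 0]) (use pass ex in auto)
next
  case (add_leaf w u c)
  have wE: "\<And>a. (w,a) \<notin> E" "\<And>a. (a,w) \<notin> E" using ex add_leaf extd_sub by blast+
  have wV0: "w \<notin> V0" using ex add_leaf extd_V0 by blast
  have "extd V' E'"
    unfolding extd_def
  proof (intro conjI)
    show "V0 \<subseteq> V'" using add_leaf extd_V0[OF ex] by auto
    show "E' \<subseteq> V' \<times> V'" using add_leaf ex unfolding extd_def by auto
    show "sym E'" using add_leaf ex unfolding extd_def sym_def by auto
    show "\<forall>a\<in>V0. \<forall>b\<in>V0. ((a, b) \<in> E') = ((a, b) \<in> E0)"
      using add_leaf ex wV0 unfolding extd_def by auto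
    show "\<forall>z a b. z \<notin> V0 \<longrightarrow> a \<in> V0 \<longrightarrow> b \<in> V0 \<longrightarrow> (z, a) \<in> E' \<longrightarrow> (z, b) \<in> E' \<longrightarrow> a = b"
    proof (intro allI impI)
      fix z a b assume h: "z \<notin> V0" "a \<in> V0" "b \<in> V0" "(z, a) \<in> E'" "(z, b) \<in> E'"
      show "a = b"
      proof (cases "z = w")
        case True
        then show ?thesis using h wE add_leaf by auto
      next
        case False
        then have "(z,a) \<in> E" "(z,b) \<in> E" using h wV0 add_leaf by auto
        then show ?thesis using ex h unfolding extd_def by blast
      qed
    qed
  qed
  then show ?thesis by (intro exI[of _ w]) (use add_leaf ex wE in auto)
qed

end

lemma three: "a < 3 \<Longrightarrow> b < 3 \<Longrightarrow> c < 3 \<Longrightarrow> a \<noteq> b \<Longrightarrow> a \<noteq> c \<Longrightarrow> b \<noteq> c \<Longrightarrow> (r::nat) < 3 \<Longrightarrow> r = a \<or> r = b \<or> r = c"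
  by arith

lemma win_stuck:
  assumes "u \<in> V" "col u = None" "\<And>r. r < 3 \<Longrightarrow> \<exists>n. (u,n) \<in> E \<and> col n = Some r"
  shows "ecg_bob_wins_bob_turn 3 V E col"
proof (rule bob_stuck)
  show "stuck 3 V E col" unfolding stuck_def legal_def using assms by (meson not_less)
qed

lemma win_now:
  assumes "u \<in> V" "w \<in> V" "u \<noteq> w" "col u = None" "col w = None" "legal 3 E col w r"
    "\<And>c. c < 3 \<Longrightarrow> \<exists>n. (u,n) \<in> E \<and> (col(w := Some r)) n = Some c"
  shows "ecg_bob_wins_bob_turn 3 V E col"
proof (rule bob_move[of w V col 3 E r])
  show "ecg_bob_wins_alice_turn 3 V E (col(w := Some r))"
  proof (rule alice_stuck)
    show "stuck 3 V E (col(w := Some r))" unfolding stuck_def legal_def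
      using assms by (metis fun_upd_other not_less)
  qed
qed (use assms in auto)

context T begin

definition Zone :: "nat \<Rightarrow> nat set" where
  "Zone j = {p i | i. j < i \<and> i < 2*m} \<union> {s. \<exists>i. j < i \<and> isp s i}"

definition near :: "(nat \<times> nat) set \<Rightarrow> nat \<Rightarrow> nat set \<Rightarrow> bool" where
  "near E z S \<longleftrightarrow> z \<in> S \<or> (\<exists>y\<in>S. (z, y) \<in> E)"

definition blk :: "(nat \<times> nat) set \<Rightarrow> (nat \<Rightarrow> nat option) \<Rightarrow> nat \<Rightarrow> nat \<Rightarrow> nat \<Rightarrow> bool" where
  "blk E col w r z \<longleftrightarrow> (z = w \<and> col w \<noteq> None) \<or> ((w, z) \<in> E \<and> col z = Some r)"

lemma Zone_V0: "y \<in> Zone j \<Longrightarrow> y \<in> V0"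
  unfolding Zone_def using p_V0 isp_V0 by fastforce

lemma Zone_p: "j < l \<Longrightarrow> l < 2*m \<Longrightarrow> p l \<in> Zone j"
  unfolding Zone_def by blast

lemma Zone_s: "j < l \<Longrightarrow> isp s l \<Longrightarrow> s \<in> Zone j"
  unfolding Zone_def by blast

lemma Zone_mono: "j \<le> j' \<Longrightarrow> Zone j' \<subseteq> Zone j"
  unfolding Zone_def by fastforce

lemma Zone_cases: "y \<in> Zone j \<Longrightarrow> (\<And>l. j < l \<Longrightarrow> l < 2*m \<Longrightarrow> y = p l \<Longrightarrow> P) \<Longrightarrow> (\<And>l. j < l \<Longrightarrow> isp y l \<Longrightarrow> P) \<Longrightarrow> P"
  unfolding Zone_def by blast

lemma not_clean_blk: "\<not> (col w = None \<and> legal 3 E col w r) \<Longrightarrow> r < 3 \<Longrightarrow> \<exists>z. blk E col w r z"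
  unfolding blk_def legal_def by auto

lemma clean_blk: "r < 3 \<Longrightarrow> \<forall>z. \<not> blk E col w r z \<Longrightarrow> col w = None \<and> legal 3 E col w r"
  using not_clean_blk by blast

lemma sE: "extd V E \<Longrightarrow> isp s i \<Longrightarrow> l \<le> 2*m \<Longrightarrow> (s, p l) \<in> E \<Longrightarrow> l = i"
  using extd_E0 isp_V0 p_V0 F_s by blast

lemma sE': "extd V E \<Longrightarrow> isp s i \<Longrightarrow> l \<le> 2*m \<Longrightarrow> (p l, s) \<in> E \<Longrightarrow> l = i"
  using sE extd_sym by blast

lemma blk_distinct:
  assumes ex: "extd V E" and s: "isp s i" and t: "isp t i" and st: "s \<noteq> t" and u: "col (p i) = None"
    and b1: "blk E col s r z" and b2: "blk E col t r z"
  shows False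
proof -
  have V: "s \<in> V0" "t \<in> V0" using s t isp_V0 by auto
  show False
  proof (cases "z = s")
    case True
    then have "z \<noteq> t" using st by simp
    then have "(t, s) \<in> E" using b2 True unfolding blk_def by auto
    then have "(t, s) \<in> E0" using extd_E0 ex V by blast
    then show False using F_ss[OF t s] st by auto
  next
    case False
    then have zs: "(s, z) \<in> E" "col z = Some r" using b1 unfolding blk_def by auto
    show False
    proof (cases "z = t")
      case True
      then have "(s, t) \<in> E0" using zs extd_E0 ex V by blast
      then show False using F_ss[OF s t] st by auto
    next
      case False
      then have "(t, z) \<in> E" using b2 unfolding blk_def by auto
      then have "(z, s) \<in> E" "(z, t) \<in> E" using zs extd_sym ex by blast+
      then have "z \<in> V0 \<and> (z, s) \<in> E0 \<and> (z, t) \<in> E0" using extd_two[OF ex] V st by blast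
      then have "z = p i" using F_zss[OF s t st] by blast
      then show False using zs u by simp
    qed
  qed
qed

lemma isp_notZone: "isp s i \<Longrightarrow> i \<le> j \<Longrightarrow> s \<notin> Zone j"
proof
  assume h: "isp s i" "i \<le> j" "s \<in> Zone j"
  show False using h(3)
  proof (rule Zone_cases)
    fix l assume "j < l" "l < 2*m" "s = p l"
    then show False using F2[OF h(1)] unfolding offp_def by simp
  next
    fix l assume "j < l" "isp s l"
    then have "(s, p l) \<in> E0" using isp_E sym' by blast
    moreover have "l \<le> 2*m" using isp_lt \<open>isp s l\<close> by fastforce
    ultimately have "l = i" using F_s[OF h(1)] by blast
    then show False using h \<open>j < l\<close> by simp
  qed
qed

lemma isp_notnear: "extd V E \<Longrightarrow> isp s i \<Longrightarrow> i < j \<Longrightarrow> \<not> near E s (Zone j)"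
  unfolding near_def
proof
  assume h: "extd V E" "isp s i" "i < j" "s \<in> Zone j \<or> (\<exists>y\<in>Zone j. (s, y) \<in> E)"
  then obtain y where y: "y \<in> Zone j" "(s, y) \<in> E" using isp_notZone by fastforce
  then have e0: "(s, y) \<in> E0" using extd_E0 h Zone_V0 isp_V0 by blast
  show False using y(1)
  proof (rule Zone_cases)
    fix l assume "j < l" "l < 2*m" "y = p l"
    then have "l = i" using F_s[OF h(2), of l] e0 by simp
    then show False using h \<open>j < l\<close> by simp
  next
    fix l assume "j < l" "isp y l"
    have "s \<noteq> y" using e0 irr by auto
    then show False using F_ss[OF h(2) \<open>isp y l\<close>] e0 by simp
  qed
qed

lemma blk_far:
  assumes ex: "extd V E" and s: "isp s i" and u: "col (p i) = None" and b: "blk E col s r z" and ij: "i < j"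
  shows "\<not> near E z (Zone j)"
proof (cases "z = s")
  case True
  then show ?thesis using isp_notnear ex s ij by blast
next
  case False
  then have zs: "(s, z) \<in> E" "col z = Some r" using b unfolding blk_def by auto
  have nzp: "z \<noteq> p i" using zs u by auto
  have sV: "s \<in> V0" using s isp_V0 by blast
  show ?thesis unfolding near_def
  proof
    assume "z \<in> Zone j \<or> (\<exists>y\<in>Zone j. (z, y) \<in> E)"
    then show False
    proof
      assume zZ: "z \<in> Zone j"
      then have "(s, z) \<in> E0" using zs extd_E0 ex sV Zone_V0 by blast
      show False using zZ
      proof (rule Zone_cases)
        fix l assume "j < l" "l < 2*m" "z = p l"
        then have "l = i" using F_s[OF s, of l] \<open>(s, z) \<in> E0\<close> by simp
        then show False using ij \<open>j < l\<close> by simp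
      next
        fix l assume "j < l" "isp z l"
        then show False using F_ss[OF s \<open>isp z l\<close>] \<open>(s, z) \<in> E0\<close> False by simp
      qed
    next
      assume "\<exists>y\<in>Zone j. (z, y) \<in> E"
      then obtain y where y: "y \<in> Zone j" "(z, y) \<in> E" by blast
      have "y \<noteq> s" using y isp_notZone s ij by fastforce
      moreover have "(z, s) \<in> E" using zs extd_sym ex by blast
      ultimately have z0: "z \<in> V0 \<and> (z, s) \<in> E0 \<and> (z, y) \<in> E0" using extd_two[OF ex] sV Zone_V0 y by blast
      show False using y(1)
      proof (rule Zone_cases)
        fix l assume "j < l" "l < 2*m" "y = p l"
        then have "l \<le> 2*m" by simp
        then show False using F_zs[OF s, of z l] z0 nzp \<open>y = p l\<close> by blast
      next
        fix l assume "j < l" "isp y l"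
        then show False using F_zss[OF s \<open>isp y l\<close> \<open>y \<noteq> s\<close>[symmetric]] z0 nzp by simp
      qed
    qed
  qed
qed

lemma p_notnear: "extd V E \<Longrightarrow> l < j \<Longrightarrow> \<not> near E (p l) (Zone j)"
  unfolding near_def
proof
  assume h: "extd V E" "l < j" "p l \<in> Zone j \<or> (\<exists>y\<in>Zone j. (p l, y) \<in> E)"
  show False
  proof (cases "p l \<in> Zone j")
    case True
    then show False
    proof (rule Zone_cases)
      fix l' assume "j < l'" "l' < 2*m" "p l = p l'"
      then show False using pinj h(2) unfolding inj_on_def by (metis atMost_iff less_imp_le_nat order.strict_trans not_less_iff_gr_or_eq)
    next
      fix l' assume "j < l'" "isp (p l) l'"
      moreover have "l \<le> 2*m" using isp_lt \<open>isp (p l) l'\<close> h(2) \<open>j < l'\<close> by fastforce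
      ultimately show False using F2 unfolding offp_def by blast
    qed
  next
    case False
    then obtain y where y: "y \<in> Zone j" "(p l, y) \<in> E" using h by blast
    have l2: "l \<le> 2*m"
    proof -
      from y(1) have "j < 2*m" by (rule Zone_cases) (auto dest: isp_lt)
      then show ?thesis using h by simp
    qed
    then have e0: "(p l, y) \<in> E0" using extd_E0 h(1) y Zone_V0 p_V0 by blast
    show False using y(1)
    proof (rule Zone_cases)
      fix l' assume "j < l'" "l' < 2*m" "y = p l'"
      then show False using F_pp[of l l'] e0 l2 h(2) by simp
    next
      fix l' assume "j < l'" "isp y l'"
      then have "l = l'" using F_s[OF \<open>isp y l'\<close> l2] e0 sym' by blast
      then show False using h(2) \<open>j < l'\<close> by simp
    qed
  qed
qed

definition badok :: "nat \<Rightarrow> nat set \<Rightarrow> (nat \<times> nat) set \<Rightarrow> (nat \<Rightarrow> nat option) \<Rightarrow> nat \<Rightarrow> bool" where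
  "badok j V E col e \<longleftrightarrow> (\<forall>z\<in>V. col z \<noteq> None \<longrightarrow> z \<noteq> p j \<longrightarrow> z \<noteq> p (2*m) \<longrightarrow> near E z (Zone j) \<longrightarrow> z = e)"

definition St :: "nat \<Rightarrow> nat set \<Rightarrow> (nat \<times> nat) set \<Rightarrow> (nat \<Rightarrow> nat option) \<Rightarrow> bool" where
  "St j V E col \<longleftrightarrow> extd V E \<and> even j \<and> j < 2*m \<and>
     (\<exists>a b. col (p j) = Some a \<and> col (p (2*m)) = Some b \<and> a \<noteq> b \<and> a < 3 \<and> b < 3) \<and>
     (\<forall>i. j < i \<longrightarrow> i < 2*m \<longrightarrow> col (p i) = None) \<and> (\<exists>e. badok j V E col e)"

end

context T begin

lemma pE_E: "extd V E \<Longrightarrow> l < 2*m \<Longrightarrow> (p l, p (Suc l)) \<in> E \<and> (p (Suc l), p l) \<in> E"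
  using extd_E0 p_V0 pE sym' by (metis Suc_leI less_imp_le_nat)

lemma isp_EE: "extd V E \<Longrightarrow> isp s i \<Longrightarrow> (p i, s) \<in> E \<and> (s, p i) \<in> E"
  using extd_E0 p_V0 isp_E isp_V0 isp_lt sym' by (metis less_imp_le_nat)

lemma blk_not_p: "extd V E \<Longrightarrow> isp s i \<Longrightarrow> blk E col s r z \<Longrightarrow> l \<le> 2*m \<Longrightarrow> l \<noteq> i \<Longrightarrow> z \<noteq> p l"
  unfolding blk_def using F2 sE unfolding offp_def by blast

lemma blk_V: "extd V E \<Longrightarrow> isp s i \<Longrightarrow> blk E col s r z \<Longrightarrow> z \<in> V"
  unfolding blk_def using isp_V0 extd_V0 extd_sub by blast

lemma blk_col: "blk E col s r z \<Longrightarrow> col z \<noteq> None"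
  unfolding blk_def by auto

lemma blk_near: "extd V E \<Longrightarrow> isp s i \<Longrightarrow> j < i \<Longrightarrow> blk E col s r z \<Longrightarrow> near E z (Zone j)"
  unfolding blk_def near_def using Zone_s extd_sym by blast

lemma near_back:
  assumes "\<forall>a b. (a,b) \<in> E' \<longrightarrow> a \<in> V \<longrightarrow> b \<in> V \<longrightarrow> (a,b) \<in> E" "extd V E" "z \<in> V" "j \<le> j'"
    "near E' z (Zone j')"
  shows "near E z (Zone j)"
  using assms Zone_mono[OF assms(4)] Zone_V0 extd_V0[OF assms(2)] unfolding near_def by blast

end

locale S = T +
  fixes j :: nat and V :: "nat set" and E :: "(nat \<times> nat) set" and col :: "nat \<Rightarrow> nat option"
    and a b c e :: nat
  assumes ex: "extd V E" and ev: "even j" and jlt: "j < 2*m"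
    and ca: "col (p j) = Some a" and cb: "col (p (2*m)) = Some b"
    and ab: "a \<noteq> b" and a3: "a < 3" and b3: "b < 3" and c3: "c < 3" and cna: "c \<noteq> a" and cnb: "c \<noteq> b"
    and unc: "\<forall>i. j < i \<longrightarrow> i < 2*m \<longrightarrow> col (p i) = None"
    and bad: "badok j V E col e"
begin

lemma j2: "Suc (Suc j) \<le> 2*m"
proof -
  obtain k where "j = 2*k" using ev by blast
  then show ?thesis using jlt by simp
qed

lemma sisp: "isp (sp (Suc j)) (Suc j)" "isp (tp (Suc j)) (Suc j)" "sp (Suc j) \<noteq> tp (Suc j)"
  using j2 ev spE' unfolding isp_def by auto

lemma inV: "l \<le> 2*m \<Longrightarrow> p l \<in> V" "isp s i \<Longrightarrow> s \<in> V"
  using p_V0 isp_V0 extd_V0[OF ex] by auto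

lemma pne: "l \<le> 2*m \<Longrightarrow> l' \<le> 2*m \<Longrightarrow> l \<noteq> l' \<Longrightarrow> p l \<noteq> p l'"
  using pinj unfolding inj_on_def by auto

lemma bad_use: "z \<in> V \<Longrightarrow> col z \<noteq> None \<Longrightarrow> z \<noteq> p j \<Longrightarrow> z \<noteq> p (2*m) \<Longrightarrow> near E z (Zone j) \<Longrightarrow> z = e"
  using bad unfolding badok_def by blast

lemma blk_e: "isp s (Suc j) \<Longrightarrow> blk E col s r z \<Longrightarrow> z = e"
proof -
  assume h: "isp s (Suc j)" "blk E col s r z"
  have ne: "2*m \<noteq> Suc j" using ev by (metis even_Suc even_mult_iff even_numeral)
  have "z \<noteq> p j" "z \<noteq> p (2*m)" using blk_not_p[OF ex h(1) h(2), of j] blk_not_p[OF ex h(1) h(2), of "2*m"] jlt ne by auto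
  then show ?thesis using bad_use blk_V[OF ex h] blk_col[OF h(2)] blk_near[OF ex h(1) _ h(2)] by simp
qed

lemma q1u: "col (p (Suc j)) = None"
  using unc j2 by simp

lemma case_k1:
  assumes k1: "Suc (Suc j) = 2*m"
  shows "ecg_bob_wins_bob_turn 3 V E col"
proof -
  let ?s = "sp (Suc j)" and ?t = "tp (Suc j)"
  have "\<exists>w. isp w (Suc j) \<and> col w = None \<and> legal 3 E col w c"
  proof (rule ccontr)
    assume "\<not> ?thesis"
    then obtain z1 z2 where z: "blk E col ?s c z1" "blk E col ?t c z2"
      using not_clean_blk[OF _ c3] sisp by metis
    then have "z1 = e" "z2 = e" using blk_e sisp by blast+
    then show False using blk_distinct[where col=col and i="Suc j", OF ex sisp(1) sisp(2) sisp(3) q1u] z by blast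
  qed
  then obtain w where w: "isp w (Suc j)" "col w = None" "legal 3 E col w c" by blast
  have off: "offp w" using F2 w by blast
  show ?thesis
  proof (rule win_now[of "p (Suc j)" V w col E c])
    show "p (Suc j) \<in> V" "w \<in> V" using inV w j2 by auto
    show "p (Suc j) \<noteq> w" using off j2 unfolding offp_def by (metis Suc_leD)
    show "col (p (Suc j)) = None" by (rule q1u)
    show "col w = None" "legal 3 E col w c" using w by auto
    fix r :: nat assume r: "r < 3"
    have e1: "(p (Suc j), p j) \<in> E" "(p (Suc j), p (2*m)) \<in> E" "(p (Suc j), w) \<in> E"
      using pE_E[OF ex, of j] pE_E[OF ex, of "Suc j"] isp_EE[OF ex w(1)] jlt j2 k1 by auto
    have n: "p j \<noteq> w" "p (2*m) \<noteq> w" using off jlt unfolding offp_def by (metis less_imp_le_nat order_refl)+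
    consider "r = a" | "r = b" | "r = c" using three[OF a3 b3 c3 ab cna[symmetric] cnb[symmetric] r] by blast
    then show "\<exists>n. (p (Suc j), n) \<in> E \<and> (col(w := Some c)) n = Some r"
      by cases (use e1 n ca cb in auto)
  qed
qed

lemma two_ne: "2*m \<noteq> Suc j" "2*m \<noteq> Suc (Suc (Suc j))"
  using ev by (metis even_Suc even_mult_iff even_numeral)+

lemma case_A:
  assumes k2: "Suc (Suc j) < 2*m" and cl: "legal 3 E col (p (Suc (Suc j))) c"
    and IH: "\<And>V' E' col'. St (Suc (Suc j)) V' E' col' \<Longrightarrow> ecg_bob_wins_bob_turn 3 V' E' col'"
  shows "ecg_bob_wins_bob_turn 3 V E col"
proof (rule bob_move[of "p (Suc (Suc j))" V col 3 E c])
  show "p (Suc (Suc j)) \<in> V" using inV k2 by simp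
  show "col (p (Suc (Suc j))) = None" using unc k2 by simp
  show "legal 3 E col (p (Suc (Suc j))) c" by (rule cl)
  show "ecg_bob_wins_alice_turn 3 V E (col(p (Suc (Suc j)) := Some c))"
  proof (rule alice_all, intro allI impI)
    fix V' E' col'
    define col1 where "col1 = col(p (Suc (Suc j)) := Some c)"
    assume mv: "ecg_alice_move 3 V E (col(p (Suc (Suc j)) := Some c)) V' E' col'"
    obtain zn where ex': "extd V' E'" and VV: "V \<subseteq> V'" and EE: "E \<subseteq> E'"
      and Vn: "\<forall>z\<in>V'. z \<notin> V \<longrightarrow> z = zn" and cz: "\<forall>u. u \<noteq> zn \<longrightarrow> col' u = col1 u"
      and eV: "\<forall>a b. (a,b) \<in> E' \<longrightarrow> a \<in> V \<longrightarrow> b \<in> V \<longrightarrow> (a,b) \<in> E"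
      and ch: "zn \<in> V \<longrightarrow> col' zn \<noteq> col1 zn \<longrightarrow> col1 zn = None \<and> (\<exists>r. col' zn = Some r \<and> legal 3 E col1 zn r)"
      using alice_step[OF mv[folded col1_def] ex] by blast
    have keep: "\<And>u. u \<in> V \<Longrightarrow> col1 u \<noteq> None \<Longrightarrow> col' u = col1 u"
      using cz ch by metis
    have ne: "p (Suc (Suc j)) \<noteq> p j" "p (Suc (Suc j)) \<noteq> p (2*m)" "p (Suc (Suc j)) \<noteq> p (Suc j)"
      using pne k2 jlt by auto
    have c1: "col1 (p j) = Some a" "col1 (p (Suc (Suc j))) = Some c" "col1 (p (2*m)) = Some b"
      "col1 (p (Suc j)) = None"
      using ne ca cb q1u unfolding col1_def by auto
    have c': "col' (p j) = Some a" "col' (p (Suc (Suc j))) = Some c" "col' (p (2*m)) = Some b"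
      using keep c1 inV jlt k2 by auto
    have ed: "(p (Suc j), p j) \<in> E'" "(p (Suc j), p (Suc (Suc j))) \<in> E'"
      using pE_E[OF ex', of j] pE_E[OF ex', of "Suc j"] jlt k2 by auto
    have int: "\<And>l. Suc (Suc j) < l \<Longrightarrow> l < 2*m \<Longrightarrow> p l \<noteq> zn \<Longrightarrow> col' (p l) = None"
    proof -
      fix l assume l: "Suc (Suc j) < l" "l < 2*m" "p l \<noteq> zn"
      then have "col' (p l) = col1 (p l)" using cz by simp
      also have "\<dots> = None" using l unc pne[of l "Suc (Suc j)"] unfolding col1_def by auto
      finally show "col' (p l) = None" .
    qed
    have bk: "\<And>z. z \<in> V' \<Longrightarrow> z \<noteq> zn \<Longrightarrow> col' z \<noteq> None \<Longrightarrow> z \<noteq> p (Suc (Suc j)) \<Longrightarrow> z \<noteq> p (2*m)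
        \<Longrightarrow> near E' z (Zone (Suc (Suc j))) \<Longrightarrow> z = e"
    proof -
      fix z assume h: "z \<in> V'" "z \<noteq> zn" "col' z \<noteq> None" "z \<noteq> p (Suc (Suc j))" "z \<noteq> p (2*m)"
        "near E' z (Zone (Suc (Suc j)))"
      have zV: "z \<in> V" using h Vn by blast
      have "col z \<noteq> None" using h cz unfolding col1_def by auto
      moreover have "near E z (Zone j)" using near_back[OF eV ex zV _ h(6)] by simp
      moreover have "z \<noteq> p j" using p_notnear[OF ex', of j "Suc (Suc j)"] h(6) by auto
      ultimately show "z = e" using bad_use zV h by blast
    qed
    show "ecg_bob_wins_bob_turn 3 V' E' col'"
    proof (cases "col' (p (Suc j)) = None")
      case False
      have "p (Suc j) = zn" using False cz c1 by metis
      show ?thesis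
      proof (rule IH)
        show "St (Suc (Suc j)) V' E' col'" unfolding St_def
        proof (intro conjI)
          show "extd V' E'" by (rule ex')
          show "even (Suc (Suc j))" using ev by simp
          show "Suc (Suc j) < 2*m" by (rule k2)
          show "\<exists>a b. col' (p (Suc (Suc j))) = Some a \<and> col' (p (2 * m)) = Some b \<and> a \<noteq> b \<and> a < 3 \<and> b < 3"
            using c' cnb c3 b3 by blast
          show "\<forall>i>Suc (Suc j). i < 2 * m \<longrightarrow> col' (p i) = None"
          proof (intro allI impI)
            fix l assume l: "Suc (Suc j) < l" "l < 2*m"
            then have "p l \<noteq> p (Suc j)" using pne[of l "Suc j"] by simp
            then show "col' (p l) = None" using int l \<open>p (Suc j) = zn\<close> by simp
          qed
          show "\<exists>e. badok (Suc (Suc j)) V' E' col' e"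
            unfolding badok_def
          proof (intro exI ballI impI)
            fix z assume h: "z \<in> V'" "col' z \<noteq> None" "z \<noteq> p (Suc (Suc j))" "z \<noteq> p (2*m)"
              "near E' z (Zone (Suc (Suc j)))"
            have "z \<noteq> zn" using p_notnear[OF ex', of "Suc j" "Suc (Suc j)"] h(5) \<open>p (Suc j) = zn\<close> by auto
            then show "z = e" using bk h by blast
          qed
        qed
      qed
    next
      case True
      note q1' = True
      have win: "\<And>w. isp w (Suc j) \<Longrightarrow> col' w = None \<Longrightarrow> legal 3 E' col' w b \<Longrightarrow> ecg_bob_wins_bob_turn 3 V' E' col'"
      proof -
        fix w assume w: "isp w (Suc j)" "col' w = None" "legal 3 E' col' w b"
        have off: "offp w" using F2 w by blast
        show "ecg_bob_wins_bob_turn 3 V' E' col'"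
        proof (rule win_now[of "p (Suc j)" V' w col' E' b])
          show "p (Suc j) \<in> V'" "w \<in> V'" using inV w j2 VV by auto
          show "p (Suc j) \<noteq> w" using off j2 unfolding offp_def by (metis Suc_leD)
          show "col' (p (Suc j)) = None" by (rule q1')
          show "col' w = None" "legal 3 E' col' w b" using w by auto
          fix r :: nat assume r: "r < 3"
          have e1: "(p (Suc j), w) \<in> E'" using isp_EE[OF ex' w(1)] by auto
          have n: "p j \<noteq> w" "p (Suc (Suc j)) \<noteq> w" using off jlt k2 unfolding offp_def by (metis less_imp_le_nat)+
          consider "r = a" | "r = b" | "r = c" using three[OF a3 b3 c3 ab cna[symmetric] cnb[symmetric] r] by blast
          then show "\<exists>n. (p (Suc j), n) \<in> E' \<and> (col'(w := Some b)) n = Some r"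
            by cases (use e1 ed n c' in auto)
        qed
      qed
      show ?thesis
      proof (cases "\<exists>w. isp w (Suc j) \<and> col' w = None \<and> legal 3 E' col' w b")
        case True
        then show ?thesis using win by blast
      next
        case False
        obtain z1 z2 where z: "blk E' col' (sp (Suc j)) b z1" "blk E' col' (tp (Suc j)) b z2"
          using not_clean_blk[OF _ b3] sisp False by metis
        have bz: "\<And>\<sigma> z. isp \<sigma> (Suc j) \<Longrightarrow> blk E' col' \<sigma> b z \<Longrightarrow> z = e \<or> z = zn"
        proof -
          fix \<sigma> z assume h: "isp \<sigma> (Suc j)" "blk E' col' \<sigma> b z"
          show "z = e \<or> z = zn"
          proof (cases "z = zn")
            case False
            have zV: "z \<in> V" using blk_V[OF ex' h] Vn False by blast
            have nz: "z \<noteq> p j" "z \<noteq> p (2*m)" "z \<noteq> p (Suc (Suc j))"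
              using blk_not_p[OF ex' h(1) h(2)] jlt k2 two_ne by auto
            have "col z \<noteq> None" using blk_col[OF h(2)] cz False nz unfolding col1_def by auto
            moreover have "near E z (Zone j)"
              using near_back[OF eV ex zV _ blk_near[OF ex' h(1) _ h(2), of j]] by simp
            ultimately show ?thesis using bad_use zV nz by blast
          qed simp
        qed
        have d: "z1 \<noteq> z2" using blk_distinct[where col=col' and i="Suc j", OF ex' sisp(1) sisp(2) sisp(3) q1'] z by blast
        have bzz: "z1 = e \<or> z1 = zn" "z2 = e \<or> z2 = zn" using bz z sisp by blast+
        have far: "\<And>z. z = e \<or> z = zn \<Longrightarrow> \<not> near E' z (Zone (Suc (Suc j)))"
        proof -
          fix z assume "z = e \<or> z = zn"
          then have "z = z1 \<or> z = z2" using bzz d by blast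
          then show "\<not> near E' z (Zone (Suc (Suc j)))"
            using blk_far[OF ex' sisp(1) q1' z(1)] blk_far[OF ex' sisp(2) q1' z(2)] by auto
        qed
        have znp: "\<And>l. l \<le> 2*m \<Longrightarrow> l \<noteq> Suc j \<Longrightarrow> zn \<noteq> p l"
        proof -
          fix l assume l: "l \<le> 2*m" "l \<noteq> Suc j"
          have "zn = z1 \<or> zn = z2" using bzz d by blast
          then show "zn \<noteq> p l" using blk_not_p[OF ex' sisp(1) z(1) l] blk_not_p[OF ex' sisp(2) z(2) l] by auto
        qed
        show ?thesis
        proof (rule IH)
          show "St (Suc (Suc j)) V' E' col'" unfolding St_def
          proof (intro conjI)
            show "extd V' E'" by (rule ex')
            show "even (Suc (Suc j))" using ev by simp
            show "Suc (Suc j) < 2*m" by (rule k2)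
            show "\<exists>a b. col' (p (Suc (Suc j))) = Some a \<and> col' (p (2 * m)) = Some b \<and> a \<noteq> b \<and> a < 3 \<and> b < 3"
              using c' cnb c3 b3 by blast
            show "\<forall>i>Suc (Suc j). i < 2 * m \<longrightarrow> col' (p i) = None"
            proof (intro allI impI)
              fix l assume l: "Suc (Suc j) < l" "l < 2*m"
              then have "p l \<noteq> zn" using znp[of l] by simp
              then show "col' (p l) = None" using int l by simp
            qed
            show "\<exists>e. badok (Suc (Suc j)) V' E' col' e"
              unfolding badok_def
            proof (intro exI ballI impI)
              fix z assume h: "z \<in> V'" "col' z \<noteq> None" "z \<noteq> p (Suc (Suc j))" "z \<noteq> p (2*m)"
                "near E' z (Zone (Suc (Suc j)))"
              have "z \<noteq> zn" using far h(5) by blast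
              then have "z = e" using bk h by blast
              then show "z = e" using far h(5) by blast
            qed
          qed
        qed
      qed
    qed
  qed
qed

lemma case_B:
  assumes k2: "Suc (Suc j) < 2*m" and ncl: "\<not> legal 3 E col (p (Suc (Suc j))) c"
  shows "ecg_bob_wins_bob_turn 3 V E col"
proof -
  have k3: "Suc (Suc (Suc j)) < 2*m" using k2 two_ne by simp
  obtain n where n: "(p (Suc (Suc j)), n) \<in> E" "col n = Some c" using ncl c3 unfolding legal_def by auto
  have nV: "n \<in> V" using n extd_sub ex by blast
  have q2Z: "p (Suc (Suc j)) \<in> Zone j" using Zone_p k2 by simp
  have q2V0: "p (Suc (Suc j)) \<in> V0" using p_V0 k2 by simp
  have "n = e"
  proof (rule bad_use)
    show "n \<in> V" "col n \<noteq> None" using nV n by auto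
    show "n \<noteq> p j"
    proof
      assume "n = p j"
      then have "(p (Suc (Suc j)), p j) \<in> E0" using n extd_E0[OF ex] p_V0 jlt k2 by simp
      then show False using F_pp[of "Suc (Suc j)" j] jlt k2 by simp
    qed
    show "n \<noteq> p (2*m)"
    proof
      assume "n = p (2*m)"
      then have "(p (Suc (Suc j)), p (2*m)) \<in> E0" using n extd_E0[OF ex] p_V0 k2 by simp
      then show False using F_pp[of "Suc (Suc j)" "2*m"] k2 two_ne by simp
    qed
    show "near E n (Zone j)" unfolding near_def using q2Z n extd_sym[OF ex] by blast
  qed
  then have eq2: "(p (Suc (Suc j)), e) \<in> E" and ce: "col e = Some c" using n by auto
  have eV: "e \<in> V" using nV \<open>n = e\<close> by simp
  have sfree: "\<And>\<sigma>. isp \<sigma> (Suc j) \<Longrightarrow> col \<sigma> = None"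
  proof (rule ccontr)
    fix \<sigma> assume h: "isp \<sigma> (Suc j)" "col \<sigma> \<noteq> None"
    have off: "offp \<sigma>" using F2 h by blast
    have "\<sigma> = e"
      by (rule bad_use) (use h inV off jlt Zone_s[of j "Suc j" \<sigma>] in \<open>auto simp: offp_def near_def\<close>)
    then have "(p (Suc (Suc j)), \<sigma>) \<in> E" using eq2 by simp
    then show False using sE'[OF ex h(1), of "Suc (Suc j)"] k2 by simp
  qed
  have e_not: "\<And>\<sigma>. isp \<sigma> (Suc j) \<Longrightarrow> (\<sigma>, e) \<notin> E"
  proof
    fix \<sigma> assume h: "isp \<sigma> (Suc j)" "(\<sigma>, e) \<in> E"
    have off: "offp \<sigma>" using F2 h by blast
    have ne: "\<sigma> \<noteq> p (Suc (Suc j))" using offp_ne[OF off, of "Suc (Suc j)"] k2 by simp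
    have "(e, \<sigma>) \<in> E" "(e, p (Suc (Suc j))) \<in> E" using h eq2 extd_sym[OF ex] by blast+
    then have "e \<in> V0 \<and> (e, \<sigma>) \<in> E0 \<and> (e, p (Suc (Suc j))) \<in> E0"
      using extd_two[OF ex isp_V0[OF h(1)] q2V0 ne] by blast
    then have "e = p (Suc j)" using F_zs[OF h(1), of e "Suc (Suc j)"] k2 by simp
    then show False using ce q1u by simp
  qed
  let ?s = "sp (Suc j)" and ?t = "tp (Suc j)"
  have offs: "offp ?s" "offp ?t" using F2 sisp by blast+
  have s_legal: "legal 3 E col ?s c"
    unfolding legal_def
  proof (intro conjI allI impI notI)
    show "c < 3" by (rule c3)
    fix w assume h: "(?s, w) \<in> E" "col w = Some c"
    have "w = e"
    proof (rule bad_use)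
      show "w \<in> V" "col w \<noteq> None" using h extd_sub[OF ex] by auto
      show "w \<noteq> p j" using sE[OF ex sisp(1), of j] h jlt by auto
      show "w \<noteq> p (2*m)" using sE[OF ex sisp(1), of "2*m"] h two_ne by auto
      show "near E w (Zone j)" unfolding near_def using h Zone_s[OF _ sisp(1), of j] extd_sym[OF ex] by blast
    qed
    then show False using e_not[OF sisp(1)] h by simp
  qed
  show ?thesis
  proof (rule bob_move[of ?s V col 3 E c])
    show "?s \<in> V" using inV sisp by blast
    show "col ?s = None" using sfree sisp by blast
    show "legal 3 E col ?s c" by (rule s_legal)
    show "ecg_bob_wins_alice_turn 3 V E (col(?s := Some c))"
    proof (rule alice_all, intro allI impI)
      fix V' E' col'
      define col1 where "col1 = col(?s := Some c)"
      assume mv: "ecg_alice_move 3 V E (col(?s := Some c)) V' E' col'"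
      obtain zn where ex': "extd V' E'" and VV: "V \<subseteq> V'" and EE: "E \<subseteq> E'"
        and Vn: "\<forall>z\<in>V'. z \<notin> V \<longrightarrow> z = zn" and cz: "\<forall>u. u \<noteq> zn \<longrightarrow> col' u = col1 u"
        and eV': "\<forall>a b. (a,b) \<in> E' \<longrightarrow> a \<in> V \<longrightarrow> b \<in> V \<longrightarrow> (a,b) \<in> E"
        and ch: "zn \<in> V \<longrightarrow> col' zn \<noteq> col1 zn \<longrightarrow> col1 zn = None \<and> (\<exists>r. col' zn = Some r \<and> legal 3 E col1 zn r)"
        using alice_step[OF mv[folded col1_def] ex] by blast
      have keep: "\<And>u. u \<in> V \<Longrightarrow> col1 u \<noteq> None \<Longrightarrow> col' u = col1 u"
        using cz ch by metis
      have nes: "?s \<noteq> p j" "?s \<noteq> p (Suc j)" "?s \<noteq> p (Suc (Suc j))" "?s \<noteq> p (Suc (Suc (Suc j)))"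
        "?s \<noteq> p (2*m)"
        using offp_ne[OF offs(1), of j] offp_ne[OF offs(1), of "Suc j"] offp_ne[OF offs(1), of "Suc (Suc j)"]
          offp_ne[OF offs(1), of "Suc (Suc (Suc j))"] offp_ne[OF offs(1), of "2*m"] jlt k3 by simp_all
      have nes2: "?s \<noteq> e" "?s \<noteq> ?t" using sfree[OF sisp(1)] ce sisp(3) by auto
      have c1: "col1 (p j) = Some a" "col1 ?s = Some c" "col1 e = Some c" "col1 (p (Suc j)) = None"
        "col1 (p (Suc (Suc j))) = None" "col1 (p (Suc (Suc (Suc j)))) = None" "col1 (p (2*m)) = Some b"
        "col1 ?t = None"
        using nes nes2 ca cb ce q1u unc k2 k3 sfree[OF sisp(2)] unfolding col1_def by auto
      have c': "col' (p j) = Some a" "col' ?s = Some c" "col' e = Some c" "col' (p (2*m)) = Some b"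
        using keep c1 inV jlt eV sisp by auto
      have ed: "(p (Suc j), p j) \<in> E'" "(p (Suc j), p (Suc (Suc j))) \<in> E'" "(p (Suc j), ?s) \<in> E'"
        "(p (Suc j), ?t) \<in> E'" "(p (Suc (Suc j)), p (Suc j)) \<in> E'"
        "(p (Suc (Suc j)), p (Suc (Suc (Suc j)))) \<in> E'" "(p (Suc (Suc j)), e) \<in> E'"
        using pE_E[OF ex', of j] pE_E[OF ex', of "Suc j"] pE_E[OF ex', of "Suc (Suc j)"]
          isp_EE[OF ex' sisp(1)] isp_EE[OF ex' sisp(2)] jlt k2 k3 eq2 EE by auto
      have nbr': "\<And>x w r. x \<in> Zone j \<Longrightarrow> (x, w) \<in> E' \<Longrightarrow> w \<noteq> zn \<Longrightarrow> w \<noteq> p j \<Longrightarrow> w \<noteq> p (2*m)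
          \<Longrightarrow> w \<noteq> ?s \<Longrightarrow> col' w = Some r \<Longrightarrow> w = e"
      proof -
        fix x w r assume h: "x \<in> Zone j" "(x, w) \<in> E'" "w \<noteq> zn" "w \<noteq> p j" "w \<noteq> p (2*m)"
          "w \<noteq> ?s" "col' w = Some r"
        have wV: "w \<in> V" using h Vn extd_sub[OF ex'] by blast
        have xV: "x \<in> V" using h Zone_V0 extd_V0[OF ex] by blast
        have "(w, x) \<in> E" using eV' h wV xV extd_sym[OF ex] by blast
        moreover have "col w \<noteq> None" using h cz unfolding col1_def by auto
        ultimately show "w = e" using bad_use wV h unfolding near_def by blast
      qed
      show "ecg_bob_wins_bob_turn 3 V' E' col'"
      proof (cases "col' (p (Suc j)) = None")
        case False
        have zq1: "p (Suc j) = zn" using False cz c1 by metis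
        obtain r where r: "col' (p (Suc j)) = Some r" "legal 3 E col1 (p (Suc j)) r"
          using ch zq1 False c1 inV j2 by (metis Suc_leD)
        have rb: "r = b"
        proof -
          have e1: "(p (Suc j), p j) \<in> E" "(p (Suc j), ?s) \<in> E"
            using pE_E[OF ex, of j] isp_EE[OF ex sisp(1)] jlt by auto
          have "r < 3" "r \<noteq> a" "r \<noteq> c" using r(2) e1 c1 unfolding legal_def by auto
          then show ?thesis using three[OF a3 b3 c3 ab cna[symmetric] cnb[symmetric]] by blast
        qed
        have q3: "p (Suc (Suc (Suc j))) \<noteq> zn" "p (Suc (Suc j)) \<noteq> zn" using zq1 pne k3 by auto
        show ?thesis
        proof (rule win_now[of "p (Suc (Suc j))" V' "p (Suc (Suc (Suc j)))" col' E' a])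
          show "p (Suc (Suc j)) \<in> V'" "p (Suc (Suc (Suc j))) \<in> V'" using inV k3 VV by auto
          show "p (Suc (Suc j)) \<noteq> p (Suc (Suc (Suc j)))" using pne k3 by simp
          show "col' (p (Suc (Suc j))) = None" "col' (p (Suc (Suc (Suc j)))) = None"
            using cz q3 c1 by auto
          show "legal 3 E' col' (p (Suc (Suc (Suc j)))) a"
            unfolding legal_def
          proof (intro conjI allI impI notI)
            show "a < 3" by (rule a3)
            fix w assume h: "(p (Suc (Suc (Suc j))), w) \<in> E'" "col' w = Some a"
            show False
            proof (cases "w = zn")
              case True
              then show False using h r rb zq1 ab by simp
            next
              case False
              have wV: "w \<in> V" using h Vn extd_sub[OF ex'] False by blast
              have "w \<noteq> p j"
              proof
                assume "w = p j"
                then have "(p (Suc (Suc (Suc j))), p j) \<in> E0"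
                  using h extd_E0[OF ex'] p_V0 jlt k3 by simp
                then show False using F_pp[of "Suc (Suc (Suc j))" j] jlt k3 by simp
              qed
              moreover have "w \<noteq> p (2*m)" using h c' ab by auto
              moreover have "w \<noteq> ?s"
              proof
                assume "w = ?s"
                then have "(p (Suc (Suc (Suc j))), ?s) \<in> E'" using h by simp
                then show False using sE'[OF ex' sisp(1), of "Suc (Suc (Suc j))"] k3 by simp
              qed
              ultimately have "w = e" using nbr'[OF Zone_p[of j "Suc (Suc (Suc j))"] h(1) False] h k3 by simp
              then show False using h c' cna by simp
            qed
          qed
          fix r' :: nat assume r': "r' < 3"
          have n3: "p (Suc j) \<noteq> p (Suc (Suc (Suc j)))" "e \<noteq> p (Suc (Suc (Suc j)))"
            using pne k3 ce unc k3 by auto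
          consider "r' = a" | "r' = b" | "r' = c" using three[OF a3 b3 c3 ab cna[symmetric] cnb[symmetric] r'] by blast
          then show "\<exists>n. (p (Suc (Suc j)), n) \<in> E' \<and> (col'(p (Suc (Suc (Suc j))) := Some a)) n = Some r'"
            by cases (use ed n3 r rb c' in auto)
        qed
      next
        case True
        note q1' = True
        have tne: "p (Suc j) \<noteq> ?t" "p j \<noteq> ?t" using offp_ne[OF offs(2), of "Suc j"] offp_ne[OF offs(2), of j] jlt j2 by simp_all
        have winT: "?t \<noteq> zn \<Longrightarrow> (\<And>w. (?t, w) \<in> E' \<Longrightarrow> col' w = Some b \<Longrightarrow> False) \<Longrightarrow> ecg_bob_wins_bob_turn 3 V' E' col'"
        proof -
          assume tz: "?t \<noteq> zn" and nb: "\<And>w. (?t, w) \<in> E' \<Longrightarrow> col' w = Some b \<Longrightarrow> False"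
          have ct: "col' ?t = None" using cz tz c1 by simp
          show ?thesis
          proof (rule win_now[of "p (Suc j)" V' ?t col' E' b])
            show "p (Suc j) \<in> V'" "?t \<in> V'" using inV j2 sisp VV by auto
            show "p (Suc j) \<noteq> ?t" by (rule tne(1))
            show "col' (p (Suc j)) = None" by (rule q1')
            show "col' ?t = None" by (rule ct)
            show "legal 3 E' col' ?t b" unfolding legal_def using nb b3 by blast
            fix r' :: nat assume r': "r' < 3"
            consider "r' = a" | "r' = b" | "r' = c" using three[OF a3 b3 c3 ab cna[symmetric] cnb[symmetric] r'] by blast
            then show "\<exists>n. (p (Suc j), n) \<in> E' \<and> (col'(?t := Some b)) n = Some r'"
              by cases (use ed tne nes nes2 c' in auto)
          qed
        qed
        have t_nbrs: "\<And>w. (?t, w) \<in> E' \<Longrightarrow> col' w = Some b \<Longrightarrow> w = zn"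
        proof (rule ccontr)
          fix w assume h: "(?t, w) \<in> E'" "col' w = Some b" "w \<noteq> zn"
          have wV: "w \<in> V" using h Vn extd_sub[OF ex'] by blast
          have tV: "?t \<in> V" using inV sisp by blast
          have tw: "(?t, w) \<in> E" using eV' h wV tV by blast
          have "w \<noteq> p j" using sE[OF ex sisp(2), of j] tw jlt by auto
          moreover have "w \<noteq> p (2*m)" using sE[OF ex sisp(2), of "2*m"] tw two_ne by auto
          moreover have "w \<noteq> ?s"
          proof
            assume "w = ?s"
            then have "(?t, ?s) \<in> E0" using tw extd_E0[OF ex] isp_V0 sisp by simp
            then show False using F_ss[OF sisp(2) sisp(1)] sisp(3) by simp
          qed
          ultimately have "w = e" using nbr'[OF Zone_s[OF _ sisp(2), of j] h(1) h(3)] h by simp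
          then show False using h c' cnb by simp
        qed
        show ?thesis
        proof (cases "col' (p (Suc (Suc j))) = None")
          case False
          have zq2: "p (Suc (Suc j)) = zn" using False cz c1 by metis
          obtain r where r: "col' (p (Suc (Suc j))) = Some r" "legal 3 E col1 (p (Suc (Suc j))) r"
            using ch zq2 False c1 inV k2 by (metis less_imp_le_nat)
          have "r < 3" "r \<noteq> c" using r(2) eq2 c1 unfolding legal_def by auto
          then consider "r = a" | "r = b" using three[OF a3 b3 c3 ab cna[symmetric] cnb[symmetric]] by blast
          then show ?thesis
          proof cases
            case 1
            show ?thesis
            proof (rule winT)
              show "?t \<noteq> zn" using zq2 offp_ne[OF offs(2), of "Suc (Suc j)"] k2 by simp
              fix w assume h: "(?t, w) \<in> E'" "col' w = Some b"
              then have "w = zn" using t_nbrs by blast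
              then have "w = p (Suc (Suc j))" using zq2 by simp
              then show False using h r 1 ab by simp
            qed
          next
            case 2
            show ?thesis
            proof (rule win_stuck[of "p (Suc j)" V' col' E'])
              show "p (Suc j) \<in> V'" using inV j2 VV by auto
              show "col' (p (Suc j)) = None" by (rule q1')
              fix r' :: nat assume r': "r' < 3"
              consider "r' = a" | "r' = b" | "r' = c" using three[OF a3 b3 c3 ab cna[symmetric] cnb[symmetric] r'] by blast
              then show "\<exists>n. (p (Suc j), n) \<in> E' \<and> col' n = Some r'"
                by cases (use ed c' r 2 in auto)
            qed
          qed
        next
          case True
          note q2' = True
          show ?thesis
          proof (cases "legal 3 E' col' (p (Suc (Suc j))) b")
            case True
            show ?thesis
            proof (rule win_now[of "p (Suc j)" V' "p (Suc (Suc j))" col' E' b])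
              show "p (Suc j) \<in> V'" "p (Suc (Suc j)) \<in> V'" using inV j2 k2 VV by auto
              show "p (Suc j) \<noteq> p (Suc (Suc j))" using pne k2 by simp
              show "col' (p (Suc j)) = None" "col' (p (Suc (Suc j))) = None" using q1' q2' by auto
              show "legal 3 E' col' (p (Suc (Suc j))) b" by (rule True)
              fix r' :: nat assume r': "r' < 3"
              have n2: "p j \<noteq> p (Suc (Suc j))" "?s \<noteq> p (Suc (Suc j))" using pne k2 nes by auto
              consider "r' = a" | "r' = b" | "r' = c" using three[OF a3 b3 c3 ab cna[symmetric] cnb[symmetric] r'] by blast
              then show "\<exists>n. (p (Suc j), n) \<in> E' \<and> (col'(p (Suc (Suc j)) := Some b)) n = Some r'"
                by cases (use ed n2 c' in auto)
            qed
          next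
            case False
            then obtain w where w: "(p (Suc (Suc j)), w) \<in> E'" "col' w = Some b"
              using b3 unfolding legal_def by auto
            have wz: "w = zn"
            proof (rule ccontr)
              assume wn: "w \<noteq> zn"
              have wV: "w \<in> V" using w Vn extd_sub[OF ex'] wn by blast
              have w2: "(p (Suc (Suc j)), w) \<in> E" using eV' w wV inV k2 by (meson less_imp_le_nat)
              have "w \<noteq> p j"
              proof
                assume "w = p j"
                then have "(p (Suc (Suc j)), p j) \<in> E0" using w2 extd_E0[OF ex] p_V0 jlt k2 by simp
                then show False using F_pp[of "Suc (Suc j)" j] jlt k2 by simp
              qed
              moreover have "w \<noteq> p (2*m)"
              proof
                assume "w = p (2*m)"
                then have "(p (Suc (Suc j)), p (2*m)) \<in> E0" using w2 extd_E0[OF ex] p_V0 k2 by simp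
                then show False using F_pp[of "Suc (Suc j)" "2*m"] k2 two_ne by simp
              qed
              moreover have "w \<noteq> ?s" using sE'[OF ex sisp(1), of "Suc (Suc j)"] w2 k2 by auto
              ultimately have "w = e" using nbr'[OF q2Z w(1) wn] w by simp
              then show False using w c' cnb by simp
            qed
            have tz: "?t \<noteq> zn"
            proof
              assume "?t = zn"
              then have "(p (Suc (Suc j)), ?t) \<in> E" using w wz eV' inV k2 sisp by (meson less_imp_le_nat)
              then show False using sE'[OF ex sisp(2), of "Suc (Suc j)"] k2 by simp
            qed
            show ?thesis
            proof (rule winT[OF tz])
              fix w' assume h: "(?t, w') \<in> E'" "col' w' = Some b"
              then have "w' = zn" using t_nbrs by blast
              then have "(zn, ?t) \<in> E'" "(zn, p (Suc (Suc j))) \<in> E'"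
                using h w wz extd_sym[OF ex'] by blast+
              moreover have "?t \<noteq> p (Suc (Suc j))" using offp_ne[OF offs(2), of "Suc (Suc j)"] k2 by simp
              ultimately have "zn \<in> V0 \<and> (zn, ?t) \<in> E0 \<and> (zn, p (Suc (Suc j))) \<in> E0"
                using extd_two[OF ex' isp_V0[OF sisp(2)] q2V0] by blast
              then have "zn = p (Suc j)" using F_zs[OF sisp(2), of zn "Suc (Suc j)"] k2 by simp
              then show False using w wz q1' by simp
            qed
          qed
        qed
      qed
    qed
  qed
qed

end


context T begin

lemma main: "St j V E col \<Longrightarrow> ecg_bob_wins_bob_turn 3 V E col"
proof (induction "2*m - j" arbitrary: j V E col rule: less_induct)
  case less
  from less.prems obtain a b e where ex: "extd V E" and ev: "even j" and jlt: "j < 2*m"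
    and ca: "col (p j) = Some a" and cb: "col (p (2*m)) = Some b" and ab: "a \<noteq> b" "a < 3" "b < 3"
    and unc: "\<forall>i. j < i \<longrightarrow> i < 2*m \<longrightarrow> col (p i) = None" and bad: "badok j V E col e"
    unfolding St_def by blast
  define c where "c = 3 - a - b"
  have cc: "c < 3" "c \<noteq> a" "c \<noteq> b" using ab unfolding c_def by arith+
  have SS: "S V0 E0 p m sp tp j V E col a b c e"
    by (intro S.intro T_axioms S_axioms.intro) (use ex ev jlt ca cb ab cc unc bad in auto)
  have j2: "Suc (Suc j) \<le> 2*m" using S.j2[OF SS] .
  show ?case
  proof (cases "Suc (Suc j) = 2*m")
    case True
    then show ?thesis using S.case_k1[OF SS] by blast
  next
    case False
    then have k2: "Suc (Suc j) < 2*m" using j2 by simp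
    show ?thesis
    proof (cases "legal 3 E col (p (Suc (Suc j))) c")
      case True
      show ?thesis
      proof (rule S.case_A[OF SS k2 True])
        fix V' E' col' assume "St (Suc (Suc j)) V' E' col'"
        moreover have "2*m - Suc (Suc j) < 2*m - j" using k2 by simp
        ultimately show "ecg_bob_wins_bob_turn 3 V' E' col'" using less.hyps by blast
      qed
    next
      case False
      then show ?thesis using S.case_B[OF SS k2] by blast
    qed
  qed
qed

end


lemma two_out: "finite N \<Longrightarrow> card N \<ge> 4 \<Longrightarrow> \<exists>s t. s \<in> N \<and> t \<in> N \<and> s \<noteq> t \<and> s \<noteq> a \<and> s \<noteq> b' \<and> t \<noteq> a \<and> t \<noteq> b'"
proof -
  assume f: "finite N" "card N \<ge> 4"
  have "card (N - {a, b'}) \<ge> card N - card {a, b'}" by (rule diff_card_le_card_Diff) simp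
  moreover have "card {a, b'} \<le> 2" by (simp add: card_insert_le_m1)
  ultimately have c2: "card (N - {a, b'}) \<ge> 2" using f by linarith
  then obtain s where s: "s \<in> N - {a, b'}" by (metis card.empty ex_in_conv not_numeral_le_zero)
  have "card (N - {a, b'} - {s}) \<ge> 1" using c2 s f by (simp add: card_Diff_singleton)
  then obtain t where t: "t \<in> N - {a, b'} - {s}" by (metis card.empty ex_in_conv not_one_le_zero)
  show ?thesis using s t by blast
qed

lemma card_two: "finite N \<Longrightarrow> a \<in> N \<Longrightarrow> b' \<in> N \<Longrightarrow> a \<noteq> b' \<Longrightarrow> card N \<ge> 2"
proof -
  assume h: "finite N" "a \<in> N" "b' \<in> N" "a \<noteq> b'"
  then have "{a, b'} \<subseteq> N" by auto
  then have "card {a, b'} \<le> card N" using h card_mono by blast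
  then show ?thesis using h by simp
qed

theorem lemma7p1:
  fixes V :: "nat set" and E :: "(nat \<times> nat) set" and col :: "nat \<Rightarrow> nat option"
    and x y v :: nat
  assumes tree: "is_tree V E"
    and colors: "\<forall>u\<in>V. \<forall>c. col u = Some c \<longrightarrow> c < 3"
    and proper: "proper_partial E col"
    and trunk: "\<forall>u\<in>V. col u \<noteq> None \<longrightarrow> degree E u = 1"
    and xV: "x \<in> V" and yV: "y \<in> V" and vV: "v \<in> V"
    and x_col: "col x \<noteq> None" and y_col: "col y \<noteq> None"
    and only: "\<forall>u\<in>V. col u \<noteq> None \<longrightarrow> u = x \<or> u = y \<or> u = v"
    and diff: "col x \<noteq> col y"
    and xy_path: "\<forall>p. is_path E p x y \<longrightarrow>
        even (length p - 1) \<and> (\<forall>i<length p. odd i \<longrightarrow> degree E (p ! i) \<ge> 4)"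
  shows "ecg_bob_wins_bob_turn 3 V E col"
proof -
  have finV: "finite V" and sub: "E \<subseteq> V \<times> V" and symE: "sym E" and irr: "\<forall>u. (u,u) \<notin> E"
    and nocyc: "\<not> has_cycle E" and conn: "\<forall>a\<in>V. \<forall>b\<in>V. \<exists>p. is_path E p a b"
    using tree unfolding is_tree_def by auto
  obtain pl where pl: "is_path E pl x y" using conn xV yV by blast
  have xy: "x \<noteq> y" using diff by auto
  have plne: "pl \<noteq> []" and wpl: "\<forall>i. Suc i < length pl \<longrightarrow> (pl ! i, pl ! Suc i) \<in> E"
    and dpl: "distinct pl" and hpl: "hd pl = x" and lpl: "last pl = y"
    using pl unfolding is_path_def is_walk_def by auto
  have evl: "even (length pl - 1)" and degs: "\<forall>i<length pl. odd i \<longrightarrow> degree E (pl ! i) \<ge> 4"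
    using xy_path pl by auto
  define m where "m = (length pl - 1) div 2"
  have lm: "length pl - 1 = 2*m" using evl unfolding m_def by simp
  have len2: "length pl \<ge> 2"
  proof (rule ccontr)
    assume "\<not> length pl \<ge> 2"
    moreover have "length pl \<noteq> 0" using plne by simp
    ultimately have "length pl = 1" by linarith
    then obtain z where "pl = [z]" by (metis One_nat_def length_0_conv length_Suc_conv)
    then have "hd pl = last pl" by simp
    then show False using hpl lpl xy by simp
  qed
  have m1: "m \<ge> 1" using lm len2 by simp
  let ?p = "\<lambda>i. pl ! i"
  have p0: "?p 0 = x" using hpl plne by (simp add: hd_conv_nth)
  have p2m: "?p (2*m) = y" using lpl plne lm by (simp add: last_conv_nth)
  have finN: "\<And>u. finite {w. (u, w) \<in> E}" using finV sub by (metis (no_types, lifting) mem_Collect_eq mem_Sigma_iff rev_finite_subset subset_eq)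
  have pE: "\<forall>i<2*m. (?p i, ?p (Suc i)) \<in> E" using wpl lm by simp
  have pinj: "inj_on ?p {..2*m}"
  proof -
    have lenpl: "length pl = Suc (2*m)" using lm len2 by simp
    show ?thesis unfolding inj_on_def
    proof (intro ballI impI)
      fix i k assume h: "i \<in> {..2*m}" "k \<in> {..2*m}" "pl ! i = pl ! k"
      then have "i < length pl" "k < length pl" using lenpl by auto
      then show "i = k" using nth_eq_iff_index_eq[OF dpl] h(3) by blast
    qed
  qed
  have "\<forall>i. \<exists>st. odd i \<and> i < 2*m \<longrightarrow> (?p i, fst st) \<in> E \<and> (?p i, snd st) \<in> E \<and> fst st \<noteq> snd st
        \<and> fst st \<noteq> ?p (i-1) \<and> fst st \<noteq> ?p (Suc i) \<and> snd st \<noteq> ?p (i-1) \<and> snd st \<noteq> ?p (Suc i)"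
  proof
    fix i
    show "\<exists>st. odd i \<and> i < 2*m \<longrightarrow> (?p i, fst st) \<in> E \<and> (?p i, snd st) \<in> E \<and> fst st \<noteq> snd st
        \<and> fst st \<noteq> ?p (i-1) \<and> fst st \<noteq> ?p (Suc i) \<and> snd st \<noteq> ?p (i-1) \<and> snd st \<noteq> ?p (Suc i)"
    proof (cases "odd i \<and> i < 2*m")
      case True
      then have "i < length pl" using lm by linarith
      then have "degree E (?p i) \<ge> 4" using degs True by blast
      then have "card {w. (?p i, w) \<in> E} \<ge> 4" unfolding degree_def .
      then obtain s t where "s \<in> {w. (?p i, w) \<in> E}" "t \<in> {w. (?p i, w) \<in> E}" "s \<noteq> t"
        "s \<noteq> ?p (i-1)" "s \<noteq> ?p (Suc i)" "t \<noteq> ?p (i-1)" "t \<noteq> ?p (Suc i)"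
        using two_out[OF finN] by blast
      then show ?thesis by (intro exI[of _ "(s, t)"]) simp
    next
      case False
      then show ?thesis by blast
    qed
  qed
  then obtain f where f: "\<forall>i. odd i \<and> i < 2*m \<longrightarrow> (?p i, fst (f i)) \<in> E \<and> (?p i, snd (f i)) \<in> E \<and> fst (f i) \<noteq> snd (f i)
        \<and> fst (f i) \<noteq> ?p (i-1) \<and> fst (f i) \<noteq> ?p (Suc i) \<and> snd (f i) \<noteq> ?p (i-1) \<and> snd (f i) \<noteq> ?p (Suc i)"
    by metis
  have TT: "T V E ?p m (\<lambda>i. fst (f i)) (\<lambda>i. snd (f i))"
    by (rule T.intro) (use sub symE irr nocyc m1 pinj pE f in auto)
  show ?thesis
  proof (rule T.main[OF TT])
    obtain a where a: "col x = Some a" using x_col by auto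
    obtain b where b: "col y = Some b" using y_col by auto
    show "T.St V E ?p m (\<lambda>i. fst (f i)) (\<lambda>i. snd (f i)) 0 V E col"
      unfolding T.St_def[OF TT]
    proof (intro conjI)
      show "T.extd V E V E" unfolding T.extd_def[OF TT] using sub symE by auto
      show "even (0::nat)" by simp
      show "0 < 2*m" using m1 by simp
      show "\<exists>a b. col (?p 0) = Some a \<and> col (?p (2 * m)) = Some b \<and> a \<noteq> b \<and> a < 3 \<and> b < 3"
        using a b p0 p2m diff colors xV yV by auto
      show "\<forall>i>0. i < 2 * m \<longrightarrow> col (?p i) = None"
      proof (intro allI impI)
        fix i :: nat assume i: "0 < i" "i < 2*m"
        have e1: "(?p i, ?p (i-1)) \<in> E" using pE i symE by (metis Suc_pred' less_imp_diff_less symD)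
        have e2: "(?p i, ?p (Suc i)) \<in> E" using pE i by simp
        have ne: "?p (i-1) \<noteq> ?p (Suc i)" using pinj i unfolding inj_on_def by fastforce
        have iV: "?p i \<in> V" using e2 sub by blast
        have "card {w. (?p i, w) \<in> E} \<ge> 2" using card_two[OF finN _ _ ne] e1 e2 by blast
        then have "degree E (?p i) \<noteq> 1" unfolding degree_def by simp
        then show "col (?p i) = None" using trunk iV by blast
      qed
      show "\<exists>e. T.badok ?p m (\<lambda>i. fst (f i)) (\<lambda>i. snd (f i)) 0 V E col e"
        unfolding T.badok_def[OF TT] using only p0 p2m by (intro exI[of _ v]) blast
    qed
  qed
qed

end
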